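(* For every $\rho>0$, every $\delta\in(0,1)$, and every $\Delta_0\in\mathbb{N}$, the Weighted Gaussian mechanism $\mathrm{WG}_{\rho,\delta,\Delta_0}$ satisfies $\delta$-approximate $\rho$-zCDP, where neighboring datasets are those differing by the addition or removal of one user's list.
   Context: Let $\mathcal{U}$ be a (possibly infinite) universe of items. A dataset is a finite sequence $x=(W_1,\dots,W_N)$ of user lists $W_i\in\mathcal{U}^*$ (finite lists of items). Datasets $x,x'$ are neighbors if one is obtained from the other by adding one user list. Let $\Phi$ be the standard normal CDF and $\Phi^{-1}$ its inverse; $[\Delta_0]=\{1,\dots,\Delta_0\}$. The Weighted Gaussian mechanism $\mathrm{WG}_{\rho,\delta,\Delta_0}(x)$: (1) For each user $i$, remove duplicates from $W_i$, and let $\overline W_i$ be a uniformly random subset of at most $\Delta_0$ of the distinct items (all of them if there are at most $\Delta_0$, else $\Delta_0$ chosen uniformly without replacement). (2) Form the histogram $H[u]=\sum_{i:\,u\in\overline W_i}1/\sqrt{|\overline W_i|}$ for every $u\in\bigcup_i\overline W_i$. (3) Set $\sigma=1/\sqrt{2\rho}$ and threshold $T=\max_{k\in[\Delta_0]}\bigl\{1/\sqrt{k}+\sigma\,\Phi^{-1}\bigl((1-\delta)^{1/k}\bigr)\bigr\}$. (4) For each $u$ in the support of $H$, independently draw $Z_u\sim\mathcal{N}(0,1/(2\rho))$ and output the set $S=\{u: H[u]+Z_u\ge T\}$. For distributions $P,Q$ and $\alpha\in(1,\infty)$, the Rényi divergence is $D_\alpha(P\|Q)=\frac{1}{\alpha-1}\log\bigl(\sum_s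 P(s)^\alpha Q(s)^{1-\alpha}\bigr)$. A mechanism $\mathcal{M}$ satisfies $\delta$-approximate $\rho$-zCDP if for all neighboring $x,x'$ there exist events $E$ (depending on $\mathcal{M}(x)$) and $E'$ (depending on $\mathcal{M}(x')$) with $\Pr[E]\ge1-\delta$, $\Pr[E']\ge1-\delta$, such that for all $\alpha\in(1,\infty)$, $D_\alpha(\mathcal{M}(x)|_E\|\mathcal{M}(x')|_{E'})\le\rho\alpha$ and $D_\alpha(\mathcal{M}(x')|_{E'}\|\mathcal{M}(x)|_{E})\le\rho\alpha$, where $|_E$ denotes conditioning on $E$. *)

theory Defs
  imports "HOL-Probability.Probability"
begin

definition Phi :: "real \<Rightarrow> real" where
  "Phi x = measure (density lborel std_normal_density) {..x}"

definition Phi_inv :: "real \<Rightarrow> real" where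
  "Phi_inv p = (THE x. Phi x = p)"

definition sample_user :: "nat \<Rightarrow> 'a list \<Rightarrow> 'a set pmf" where
  "sample_user \<Delta>0 W =
     (if card (set W) \<le> \<Delta>0 then return_pmf (set W)
      else pmf_of_set {A. A \<subseteq> set W \<and> card A = \<Delta>0})"

fun sample_users :: "nat \<Rightarrow> 'a list list \<Rightarrow> 'a set list pmf" where
  "sample_users \<Delta>0 [] = return_pmf []"
| "sample_users \<Delta>0 (W # Ws) =
     bind_pmf (sample_user \<Delta>0 W) (\<lambda>A. bind_pmf (sample_users \<Delta>0 Ws) (\<lambda>As. return_pmf (A # As)))"

definition hist :: "'a set list \<Rightarrow> 'a \<Rightarrow> real" where
  "hist As u = sum_list (map (\<lambda>A. if u \<in> A then 1 / sqrt (real (card A)) else 0) As)"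

definition wg_sigma :: "real \<Rightarrow> real" where
  "wg_sigma \<rho> = 1 / sqrt (2 * \<rho>)"

definition wg_threshold :: "real \<Rightarrow> real \<Rightarrow> nat \<Rightarrow> real" where
  "wg_threshold \<rho> \<delta> \<Delta>0 =
     Max ((\<lambda>k::nat. 1 / sqrt (real k) + wg_sigma \<rho> * Phi_inv ((1 - \<delta>) powr (1 / real k))) ` {1..\<Delta>0})"

text \<open>Step (4): for each item u in the support, Z_u ~ N(0, 1/(2 rho)) independently, and u is
  output iff hist u + Z_u >= T.  The event for u has probability
  P[Z_u >= T - hist u]; the output set is distributed as the set of successes of
  independent Bernoulli trials with these probabilities.\<close>
definition pass_prob :: "real \<Rightarrow> real \<Rightarrow> real \<Rightarrow> real" where
  "pass_prob \<sigma> T h = measure (density lborel (normal_density 0 \<sigma>)) {z. h + z \<ge> T}"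

definition WG :: "real \<Rightarrow> real \<Rightarrow> nat \<Rightarrow> 'a list list \<Rightarrow> 'a set pmf" where
  "WG \<rho> \<delta> \<Delta>0 x =
     bind_pmf (sample_users \<Delta>0 x) (\<lambda>As.
       map_pmf (\<lambda>f. {u \<in> \<Union>(set As). f u})
         (Pi_pmf (\<Union>(set As)) False
            (\<lambda>u. bernoulli_pmf (pass_prob (wg_sigma \<rho>) (wg_threshold \<rho> \<delta> \<Delta>0) (hist As u)))))"

definition add_user :: "'a list list \<Rightarrow> 'a list list \<Rightarrow> bool" where
  "add_user x x' \<longleftrightarrow> (\<exists>i W. i \<le> length x \<and> x' = take i x @ W # drop i x)"

definition neighbors :: "'a list list \<Rightarrow> 'a list list \<Rightarrow> bool" where
  "neighbors x x' \<longleftrightarrow> add_user x x' \<or> add_user x' x"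

definition renyi_div :: "real \<Rightarrow> 'b pmf \<Rightarrow> 'b pmf \<Rightarrow> ereal" where
  "renyi_div \<alpha> P Q =
     (if set_pmf P \<subseteq> set_pmf Q \<and>
         (\<lambda>s. pmf P s powr \<alpha> * pmf Q s powr (1 - \<alpha>)) summable_on set_pmf P
      then ereal (1 / (\<alpha> - 1) *
             ln (\<Sum>\<^sub>\<infinity>s\<in>set_pmf P. pmf P s powr \<alpha> * pmf Q s powr (1 - \<alpha>)))
      else \<infinity>)"

text \<open>cond_on_event delta P Q: Q is the distribution P conditioned on an event E of
  probability at least 1 - delta.  An event E on the mechanism's random coins is described
  by the conditional probability e s = Pr[E | output = s]; then Pr[E] = sum_s P(s) e(s) and
  (P|_E)(s) = P(s) e(s) / Pr[E].\<close>
definition cond_on_event :: "real \<Rightarrow> 'b pmf \<Rightarrow> 'b pmf \<Rightarrow> bool" where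
  "cond_on_event \<delta> P Q \<longleftrightarrow>
     (\<exists>e :: 'b \<Rightarrow> real. (\<forall>s. 0 \<le> e s \<and> e s \<le> 1) \<and>
        (\<lambda>s. pmf P s * e s) summable_on UNIV \<and>
        (\<Sum>\<^sub>\<infinity>s. pmf P s * e s) \<ge> 1 - \<delta> \<and>
        (\<forall>s. pmf Q s = pmf P s * e s / (\<Sum>\<^sub>\<infinity>t. pmf P t * e t)))"

definition approx_zCDP :: "real \<Rightarrow> real \<Rightarrow> ('d \<Rightarrow> 'd \<Rightarrow> bool) \<Rightarrow> ('d \<Rightarrow> 'b pmf) \<Rightarrow> bool" where
  "approx_zCDP \<delta> \<rho> nbr M \<longleftrightarrow>
     (\<forall>x x'. nbr x x' \<longrightarrow>
        (\<exists>Q Q'. cond_on_event \<delta> (M x) Q \<and> cond_on_event \<delta> (M x') Q' \<and>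
           (\<forall>\<alpha>>1. renyi_div \<alpha> Q Q' \<le> ereal (\<rho> * \<alpha>) \<and>
                   renyi_div \<alpha> Q' Q \<le> ereal (\<rho> * \<alpha>))))"

end

theory Submission
  imports Defs
begin


lemma ind_nd_int:
  assumes \<sigma>: "0 < \<sigma>" and "A \<in> sets borel"
  shows "integrable lborel (\<lambda>x. indicator A x * normal_density \<mu> \<sigma> x)"
  using integrable_real_mult_indicator[OF _ integrable_normal_density[OF \<sigma>, of \<mu>], of A] assms
  by (simp add: mult.commute)

lemma nd_measure_integral:
  assumes \<sigma>: "0 < \<sigma>" and "A \<in> sets borel"
  shows "measure (density lborel (normal_density \<mu> \<sigma>)) A = (\<integral>x. indicator A x * normal_density \<mu> \<sigma> x \<partial>lborel)"
proof -
  have int: "integrable lborel (\<lambda>x. indicator A x * normal_density \<mu> \<sigma> x)"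
    using assms by (intro ind_nd_int)
  have "emeasure (density lborel (normal_density \<mu> \<sigma>)) A = (\<integral>\<^sup>+ x. ennreal (normal_density \<mu> \<sigma> x) * indicator A x \<partial>lborel)"
    using assms by (simp add: emeasure_density)
  also have "\<dots> = (\<integral>\<^sup>+ x. ennreal (indicator A x * normal_density \<mu> \<sigma> x) \<partial>lborel)"
    by (intro nn_integral_cong) (auto simp: indicator_def)
  also have "\<dots> = ennreal (\<integral>x. indicator A x * normal_density \<mu> \<sigma> x \<partial>lborel)"
    using int by (intro nn_integral_eq_integral) auto
  finally show ?thesis
    by (simp add: measure_def integral_nonneg_AE)
qed

lemma pass_prob_integral:
  assumes \<sigma>: "0 < \<sigma>"
  shows "pass_prob \<sigma> T h = (\<integral>y. indicator {T..} y * normal_density h \<sigma> y \<partial>lborel)"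
proof -
  have "pass_prob \<sigma> T h = (\<integral>z. indicator {z. h + z \<ge> T} z * normal_density 0 \<sigma> z \<partial>lborel)"
    unfolding pass_prob_def by (rule nd_measure_integral[OF \<sigma>]) measurable
  also have "\<dots> = (\<integral>y. indicator {z. h + z \<ge> T} (-h + 1*y) * normal_density 0 \<sigma> (-h + 1*y) \<partial>lborel)"
    using lborel_integral_real_affine[of 1 "\<lambda>z. indicator {z. h + z \<ge> T} z * normal_density 0 \<sigma> z" "-h"]
    by simp
  also have "\<dots> = (\<integral>y. indicator {T..} y * normal_density h \<sigma> y \<partial>lborel)"
    by (intro Bochner_Integration.integral_cong refl) (auto simp: indicator_def normal_density_def algebra_simps)
  finally show ?thesis .
qed

lemma fail_prob_integral:
  assumes \<sigma>: "0 < \<sigma>"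
  shows "1 - pass_prob \<sigma> T h = (\<integral>y. indicator {..<T} y * normal_density h \<sigma> y \<partial>lborel)"
proof -
  have i1: "integrable lborel (\<lambda>y. indicator {T..} y * normal_density h \<sigma> y)"
    by (rule ind_nd_int[OF \<sigma>]) auto
  have i2: "integrable lborel (\<lambda>y. indicator {..<T} y * normal_density h \<sigma> y)"
    by (rule ind_nd_int[OF \<sigma>]) auto
  have "(\<integral>y. normal_density h \<sigma> y \<partial>lborel) = (\<integral>y. indicator {T..} y * normal_density h \<sigma> y + indicator {..<T} y * normal_density h \<sigma> y \<partial>lborel)"
    by (intro Bochner_Integration.integral_cong) (auto simp: indicator_def)
  then have "1 = (\<integral>y. indicator {T..} y * normal_density h \<sigma> y + indicator {..<T} y * normal_density h \<sigma> y \<partial>lborel)"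
    using integral_normal_density[OF \<sigma>, of h] by simp
  also have "\<dots> = pass_prob \<sigma> T h + (\<integral>y. indicator {..<T} y * normal_density h \<sigma> y \<partial>lborel)"
    using i1 i2 by (simp add: pass_prob_integral[OF \<sigma>])
  finally show ?thesis by simp
qed

lemma nd_powr_prod:
  assumes \<sigma>: "0 < \<sigma>"
  shows "normal_density a \<sigma> y powr \<alpha> * normal_density b \<sigma> y powr (1 - \<alpha>) =
    exp (\<alpha> * (\<alpha> - 1) * (a - b)\<^sup>2 / (2 * \<sigma>\<^sup>2)) * normal_density (\<alpha> * a + (1 - \<alpha>) * b) \<sigma> y"
proof -
  define K where "K = 1 / sqrt (2 * pi * \<sigma>\<^sup>2)"
  have K: "K > 0" using \<sigma> by (simp add: K_def)
  have gen: "(K * exp u) powr \<alpha> * (K * exp v) powr (1 - \<alpha>) = K * exp (\<alpha> * u + (1 - \<alpha>) * v)" for u v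
  proof -
    have "(K * exp u) powr \<alpha> * (K * exp v) powr (1 - \<alpha>) =
        (K powr \<alpha> * K powr (1 - \<alpha>)) * (exp u powr \<alpha> * exp v powr (1 - \<alpha>))"
      by (simp add: powr_mult)
    also have "K powr \<alpha> * K powr (1 - \<alpha>) = K"
      using K by (simp add: powr_add[symmetric])
    also have "exp u powr \<alpha> * exp v powr (1 - \<alpha>) = exp (\<alpha> * u + (1 - \<alpha>) * v)"
      by (simp add: exp_powr_real exp_add[symmetric] algebra_simps)
    finally show ?thesis .
  qed
  have e: "\<alpha> * (-(y - a)\<^sup>2 / (2 * \<sigma>\<^sup>2)) + (1 - \<alpha>) * (-(y - b)\<^sup>2 / (2 * \<sigma>\<^sup>2)) =
      \<alpha> * (\<alpha> - 1) * (a - b)\<^sup>2 / (2 * \<sigma>\<^sup>2) + (-(y - (\<alpha> * a + (1 - \<alpha>) * b))\<^sup>2 / (2 * \<sigma>\<^sup>2))"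
    using \<sigma> by (simp add: field_simps power2_eq_square)
  show ?thesis
    unfolding normal_density_def K_def[symmetric] gen e
    by (simp add: exp_add[symmetric])
qed

lemma integrable_nd_powr_prod:
  assumes \<sigma>: "0 < \<sigma>" and A: "A \<in> sets borel"
  shows "integrable lborel (\<lambda>y. indicator A y * (normal_density a \<sigma> y powr \<alpha> * normal_density b \<sigma> y powr (1 - \<alpha>)))"
  unfolding nd_powr_prod[OF \<sigma>]
  by (subst mult.left_commute, intro integrable_mult_right ind_nd_int[OF \<sigma> A])

lemma region_jensen:
  assumes \<sigma>: "0 < \<sigma>" and \<alpha>: "1 < \<alpha>" and A: "A \<in> sets borel"
    and Ib: "0 < (\<integral>y. indicator A y * normal_density b \<sigma> y \<partial>lborel)"
  shows "(\<integral>y. indicator A y * normal_density a \<sigma> y \<partial>lborel) powr \<alpha> *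
         (\<integral>y. indicator A y * normal_density b \<sigma> y \<partial>lborel) powr (1 - \<alpha>)
       \<le> (\<integral>y. indicator A y * (normal_density a \<sigma> y powr \<alpha> * normal_density b \<sigma> y powr (1 - \<alpha>)) \<partial>lborel)"
proof -
  define Ib where "Ib = (\<integral>y. indicator A y * normal_density b \<sigma> y \<partial>lborel)"
  define Ia where "Ia = (\<integral>y. indicator A y * normal_density a \<sigma> y \<partial>lborel)"
  define Iab where "Iab = (\<integral>y. indicator A y * (normal_density a \<sigma> y powr \<alpha> * normal_density b \<sigma> y powr (1 - \<alpha>)) \<partial>lborel)"
  have Ib0: "Ib > 0" using Ib by (simp add: Ib_def)
  note Ibd = Ib_def
  define g where "g y = indicator A y * normal_density b \<sigma> y / Ib" for y
  define X where "X y = normal_density a \<sigma> y / normal_density b \<sigma> y" for y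
  have [measurable]: "g \<in> borel_measurable borel" "X \<in> borel_measurable borel"
    using A unfolding g_def[abs_def] X_def[abs_def] by measurable
  have gnn: "0 \<le> g y" for y using Ib0 by (simp add: g_def)
  let ?M = "density lborel g"
  have intb: "integrable lborel (\<lambda>y. indicator A y * normal_density b \<sigma> y)"
    by (rule ind_nd_int[OF \<sigma> A])
  interpret M: prob_space ?M
  proof
    have "emeasure ?M (space ?M) = (\<integral>\<^sup>+ y. ennreal (g y) \<partial>lborel)"
      by (simp add: emeasure_density)
    also have "\<dots> = ennreal (\<integral>y. g y \<partial>lborel)"
      using intb gnn unfolding g_def by (intro nn_integral_eq_integral) auto
    also have "(\<integral>y. g y \<partial>lborel) = 1"
      using Ib0 unfolding g_def by (simp add: Ibd)
    finally show "emeasure ?M (space ?M) = 1" by simp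
  qed
  have gX: "g y * X y = indicator A y * normal_density a \<sigma> y / Ib" for y
    using normal_density_pos[OF \<sigma>, of b y] by (simp add: g_def X_def)
  have gqX: "g y * X y powr \<alpha> = indicator A y * (normal_density a \<sigma> y powr \<alpha> * normal_density b \<sigma> y powr (1 - \<alpha>)) / Ib" for y
    using normal_density_pos[OF \<sigma>, of b y]
    by (simp add: g_def X_def powr_divide powr_diff mult_ac)
  have intX: "integrable ?M X"
    by (subst integrable_density) (auto simp: gnn gX intro!: ind_nd_int[OF \<sigma> A])
  have intqX: "integrable ?M (\<lambda>y. X y powr \<alpha>)"
    by (subst integrable_density) (auto simp: gnn gqX intro!: integrable_nd_powr_prod[OF \<sigma> A])
  have EX: "M.expectation X = Ia / Ib"
    by (subst integral_density) (auto simp: gnn gX Ia_def)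
  have EqX: "M.expectation (\<lambda>y. X y powr \<alpha>) = Iab / Ib"
    by (subst integral_density) (auto simp: gnn gqX Iab_def)
  have Xpos: "AE y in ?M. X y \<in> {0<..}"
    using normal_density_pos[OF \<sigma>] by (auto simp: X_def)
  have "M.expectation X powr \<alpha> \<le> M.expectation (\<lambda>y. X y powr \<alpha>)"
    by (rule M.jensens_inequality[OF intX Xpos _ intqX powr_convex]) (use \<alpha> in auto)
  then have j: "(Ia / Ib) powr \<alpha> \<le> Iab / Ib" by (simp add: EX EqX)
  have "Ia powr \<alpha> * Ib powr (1 - \<alpha>) = Ib * (Ia / Ib) powr \<alpha>"
    using Ib0 by (simp add: powr_divide powr_diff)
  also have "\<dots> \<le> Ib * (Iab / Ib)"
    using j Ib0 by (intro mult_left_mono) auto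
  also have "\<dots> = Iab" using Ib0 by simp
  finally show ?thesis unfolding Ia_def Ibd Iab_def .
qed

lemma ind_nd_pos:
  assumes \<sigma>: "0 < \<sigma>" and A: "A \<in> sets borel" and pos: "emeasure lborel A > 0"
  shows "0 < (\<integral>y. indicator A y * normal_density h \<sigma> y \<partial>lborel)"
proof -
  have nn: "0 \<le> (\<integral>y. indicator A y * normal_density h \<sigma> y \<partial>lborel)"
    by (intro integral_nonneg_AE) auto
  have "(\<integral>y. indicator A y * normal_density h \<sigma> y \<partial>lborel) \<noteq> 0"
  proof
    assume "(\<integral>y. indicator A y * normal_density h \<sigma> y \<partial>lborel) = 0"
    then have "AE y in lborel. indicator A y * normal_density h \<sigma> y = 0"
      using integral_nonneg_eq_0_iff_AE[OF ind_nd_int[OF \<sigma> A, of h]] by auto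
    then have "AE y in lborel. y \<notin> A"
    proof (rule AE_mp, intro AE_I2 impI)
      fix y assume "indicator A y * normal_density h \<sigma> y = 0"
      then show "y \<notin> A" using normal_density_pos[OF \<sigma>, of h y] by (auto simp: indicator_def split: if_splits)
    qed
    then have "emeasure lborel A = 0"
      using AE_iff_measurable[of A lborel "\<lambda>y. y \<notin> A"] A by auto
    with pos show False by simp
  qed
  with nn show ?thesis by linarith
qed

lemma emeasure_lborel_atLeast_pos: "emeasure lborel {T::real..} > 0"
proof -
  have "emeasure lborel {T..T+1} \<le> emeasure lborel {T::real..}"
    by (intro emeasure_mono) auto
  then show ?thesis by (rule order.strict_trans2[rotated]) simp
qed

lemma emeasure_lborel_lessThan_pos: "emeasure lborel {..<T::real} > 0"
proof -
  have "emeasure lborel {T-2..T-1} \<le> emeasure lborel {..<T::real}"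
    by (intro emeasure_mono) auto
  then show ?thesis by (rule order.strict_trans2[rotated]) simp
qed

lemma pass_prob_pos: "0 < \<sigma> \<Longrightarrow> 0 < pass_prob \<sigma> T h"
  by (simp add: pass_prob_integral ind_nd_pos emeasure_lborel_atLeast_pos)

lemma pass_prob_less1: "0 < \<sigma> \<Longrightarrow> pass_prob \<sigma> T h < 1"
  using fail_prob_integral[of \<sigma> T h] ind_nd_pos[of \<sigma> "{..<T}" h] emeasure_lborel_lessThan_pos[of T]
  by simp

lemma bern_bound:
  assumes \<sigma>: "0 < \<sigma>" and \<alpha>: "1 < \<alpha>"
  shows "pass_prob \<sigma> T a powr \<alpha> * pass_prob \<sigma> T b powr (1 - \<alpha>) +
         (1 - pass_prob \<sigma> T a) powr \<alpha> * (1 - pass_prob \<sigma> T b) powr (1 - \<alpha>)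
       \<le> exp (\<alpha> * (\<alpha> - 1) * (a - b)\<^sup>2 / (2 * \<sigma>\<^sup>2))"
proof -
  let ?f = "\<lambda>y. normal_density a \<sigma> y powr \<alpha> * normal_density b \<sigma> y powr (1 - \<alpha>)"
  have r1: "pass_prob \<sigma> T a powr \<alpha> * pass_prob \<sigma> T b powr (1 - \<alpha>) \<le> (\<integral>y. indicator {T..} y * ?f y \<partial>lborel)"
    unfolding pass_prob_integral[OF \<sigma>]
    by (rule region_jensen[OF \<sigma> \<alpha>]) (auto intro!: ind_nd_pos[OF \<sigma>] emeasure_lborel_atLeast_pos)
  have r2: "(1 - pass_prob \<sigma> T a) powr \<alpha> * (1 - pass_prob \<sigma> T b) powr (1 - \<alpha>) \<le> (\<integral>y. indicator {..<T} y * ?f y \<partial>lborel)"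
    unfolding fail_prob_integral[OF \<sigma>]
    by (rule region_jensen[OF \<sigma> \<alpha>]) (auto intro!: ind_nd_pos[OF \<sigma>] emeasure_lborel_lessThan_pos)
  have "(\<integral>y. indicator {T..} y * ?f y \<partial>lborel) + (\<integral>y. indicator {..<T} y * ?f y \<partial>lborel)
      = (\<integral>y. indicator {T..} y * ?f y + indicator {..<T} y * ?f y \<partial>lborel)"
    by (intro Bochner_Integration.integral_add[symmetric] integrable_nd_powr_prod[OF \<sigma>]) auto
  also have "\<dots> = (\<integral>y. ?f y \<partial>lborel)"
    by (intro Bochner_Integration.integral_cong) (auto simp: indicator_def)
  also have "\<dots> = exp (\<alpha> * (\<alpha> - 1) * (a - b)\<^sup>2 / (2 * \<sigma>\<^sup>2))"
    unfolding nd_powr_prod[OF \<sigma>] using integral_normal_density[OF \<sigma>] by simp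
  finally show ?thesis using r1 r2 by linarith
qed


lemma Phi_cdf: "Phi = cdf (density lborel std_normal_density)"
  by (simp add: Phi_def cdf_def fun_eq_iff)

interpretation std: real_distribution "density lborel std_normal_density"
proof -
  interpret prob_space "density lborel std_normal_density" by (rule prob_space_normal_density) simp
  show "real_distribution (density lborel std_normal_density)" by standard simp
qed

lemma Phi_isCont: "isCont Phi x"
  unfolding Phi_cdf std.isCont_cdf
proof -
  have "measure (density lborel std_normal_density) {x} = (\<integral>y. indicator {x} y * std_normal_density y \<partial>lborel)"
    by (rule nd_measure_integral) auto
  also have "\<dots> = 0"
    by (rule integral_eq_zero_AE) (use AE_lborel_singleton[of x] in \<open>eventually_elim, auto\<close>)
  finally show "measure (density lborel std_normal_density) {x} = 0" .
qed

lemma Phi_strict_mono: assumes "x < y" shows "Phi x < Phi y"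
proof -
  have "Phi y - Phi x = measure (density lborel std_normal_density) {x<..y}"
    unfolding Phi_cdf using std.cdf_diff_eq[OF assms] .
  also have "\<dots> = (\<integral>t. indicator {x<..y} t * std_normal_density t \<partial>lborel)"
    by (rule nd_measure_integral) auto
  also have "\<dots> > 0"
    using assms by (intro ind_nd_pos) auto
  finally show ?thesis by simp
qed

lemma Phi_Phi_inv:
  assumes "0 < p" "p < 1"
  shows "Phi (Phi_inv p) = p"
proof -
  have "(Phi \<longlongrightarrow> 0) at_bot" unfolding Phi_cdf by (rule std.cdf_lim_at_bot)
  then have "eventually (\<lambda>x. Phi x < p) at_bot" using assms by (intro order_tendstoD) auto
  then obtain a where a: "Phi a < p" by (auto simp: eventually_at_bot_linorder)
  have "(Phi \<longlongrightarrow> 1) at_top" unfolding Phi_cdf by (rule std.cdf_lim_at_top_prob)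
  then have "eventually (\<lambda>x. Phi x > p) at_top" using assms by (intro order_tendstoD) auto
  then obtain b where b: "Phi b > p" by (auto simp: eventually_at_top_linorder)
  have ab: "a \<le> b"
  proof (rule ccontr)
    assume "\<not> a \<le> b" then have "Phi b < Phi a" by (intro Phi_strict_mono) auto
    with a b show False by simp
  qed
  obtain x where x: "Phi x = p"
  proof -
    have "\<exists>x. a \<le> x \<and> x \<le> b \<and> Phi x = p"
      by (rule IVT) (use a b ab Phi_isCont in auto)
    then show ?thesis using that by blast
  qed
  have uniq: "y = x" if "Phi y = p" for y
  proof (rule ccontr)
    assume "y \<noteq> x"
    then have "y < x \<or> x < y" by auto
    then show False
    proof
      assume "y < x" then have "Phi y < Phi x" by (rule Phi_strict_mono)
      with that x show False by linarith
    next
      assume "x < y" then have "Phi x < Phi y" by (rule Phi_strict_mono)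
      with that x show False by linarith
    qed
  qed
  have "Phi_inv p = x"
    unfolding Phi_inv_def by (rule the_equality) (use x uniq in blast)+
  then show ?thesis using x by simp
qed


lemma fail_prob_ge_Phi:
  assumes \<sigma>: "0 < \<sigma>" and le: "\<sigma> * y0 \<le> T - h"
  shows "Phi y0 \<le> 1 - pass_prob \<sigma> T h"
proof -
  have "1 - pass_prob \<sigma> T h = (\<integral>y. indicator {..<T} y * normal_density h \<sigma> y \<partial>lborel)"
    by (rule fail_prob_integral[OF \<sigma>])
  also have "\<dots> = \<sigma> * (\<integral>t. indicator {..<T} (h + \<sigma> * t) * normal_density h \<sigma> (h + \<sigma> * t) \<partial>lborel)"
  proof -
    have ne: "\<sigma> \<noteq> 0" using \<sigma> by simp
    show ?thesis
      using lborel_integral_real_affine[OF ne, of "\<lambda>y. indicator {..<T} y * normal_density h \<sigma> y" h] \<sigma>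
      by (simp only: abs_of_pos real_scaleR_def)
  qed
  also have "(\<lambda>t. indicator {..<T} (h + \<sigma> * t) * normal_density h \<sigma> (h + \<sigma> * t)) =
      (\<lambda>t. indicator {t. h + \<sigma> * t < T} t * std_normal_density t / \<sigma>)"
  proof
    fix t
    have e1: "(h + \<sigma> * t - h)\<^sup>2 / (2 * \<sigma>\<^sup>2) = t\<^sup>2 / 2"
      using \<sigma> by (simp add: power_mult_distrib)
    have e2: "sqrt (2 * pi * \<sigma>\<^sup>2) = sqrt (2 * pi) * \<sigma>"
      using \<sigma> by (simp add: real_sqrt_mult)
    have "normal_density h \<sigma> (h + \<sigma> * t) = std_normal_density t / \<sigma>"
      unfolding normal_density_def e2 using e1 by simp
    then show "indicator {..<T} (h + \<sigma> * t) * normal_density h \<sigma> (h + \<sigma> * t) =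
      indicator {t. h + \<sigma> * t < T} t * std_normal_density t / \<sigma>"
      by (simp add: indicator_def)
  qed
  also have "\<sigma> * (\<integral>t. indicator {t. h + \<sigma> * t < T} t * std_normal_density t / \<sigma> \<partial>lborel)
      = (\<integral>t. indicator {t. h + \<sigma> * t < T} t * std_normal_density t \<partial>lborel)"
    using \<sigma> by simp
  finally have eq: "1 - pass_prob \<sigma> T h = (\<integral>t. indicator {t. h + \<sigma> * t < T} t * std_normal_density t \<partial>lborel)" .
  have "Phi y0 = (\<integral>t. indicator {..y0} t * std_normal_density t \<partial>lborel)"
    unfolding Phi_def by (rule nd_measure_integral) auto
  also have "\<dots> = (\<integral>t. indicator {..<y0} t * std_normal_density t \<partial>lborel)"
  proof (rule integral_cong_AE)
    show "AE t in lborel. indicator {..y0} t * std_normal_density t = indicator {..<y0} t * std_normal_density t"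
      using AE_lborel_singleton[of y0] by (rule eventually_mono) (simp add: indicator_def)
  qed auto
  also have "\<dots> \<le> (\<integral>t. indicator {t. h + \<sigma> * t < T} t * std_normal_density t \<partial>lborel)"
  proof (rule integral_mono)
    show "integrable lborel (\<lambda>t. indicator {..<y0} t * std_normal_density t)" by (rule ind_nd_int) auto
    show "integrable lborel (\<lambda>t. indicator {t. h + \<sigma> * t < T} t * std_normal_density t)" by (rule ind_nd_int) auto
    fix t
    have "t < y0 \<Longrightarrow> h + \<sigma> * t < T"
      using le \<sigma> mult_strict_left_mono[of t y0 \<sigma>] by linarith
    then show "indicator {..<y0} t * std_normal_density t \<le> indicator {t. h + \<sigma> * t < T} t * std_normal_density t"
      by (auto simp: indicator_def)
  qed
  finally show ?thesis using eq by simp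
qed


lemma powr_convex0:
  fixes x y t \<alpha> :: real
  assumes \<alpha>: "1 \<le> \<alpha>" and x: "0 \<le> x" and y: "0 \<le> y" and t: "0 \<le> t" "t \<le> 1"
  shows "((1 - t) * x + t * y) powr \<alpha> \<le> (1 - t) * x powr \<alpha> + t * y powr \<alpha>"
proof -
  have tp: "s powr \<alpha> \<le> s" if "0 \<le> s" "s \<le> 1" for s :: real
  proof (cases "s = 0")
    case False
    then have "s powr \<alpha> \<le> s powr 1" using that \<alpha> by (intro powr_mono') auto
    then show ?thesis using that by simp
  qed simp
  consider "x = 0" | "y = 0" | "x > 0" "y > 0" using x y by linarith
  then show ?thesis
  proof cases
    case 1
    have "(t * y) powr \<alpha> = t powr \<alpha> * y powr \<alpha>" by (simp add: powr_mult)
    also have "\<dots> \<le> t * y powr \<alpha>" using tp[OF t] by (intro mult_right_mono) auto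
    finally show ?thesis using 1 \<alpha> by simp
  next
    case 2
    have "((1 - t) * x) powr \<alpha> = (1 - t) powr \<alpha> * x powr \<alpha>" by (simp add: powr_mult)
    also have "\<dots> \<le> (1 - t) * x powr \<alpha>" using tp[of "1 - t"] t by (intro mult_right_mono) auto
    finally show ?thesis using 2 \<alpha> by simp
  next
    case 3
    show ?thesis
      using convex_onD[OF powr_convex[OF \<alpha>], of t x y] 3 t by simp
  qed
qed

lemma powr_scale_eq:
  fixes a b :: real
  assumes "0 < b" "0 \<le> a"
  shows "b * (a / b) powr \<alpha> = a powr \<alpha> * b powr (1 - \<alpha>)"
  using assms by (simp add: powr_divide powr_diff)

lemma two_point:
  fixes a1 a2 b1 b2 \<alpha> :: real
  assumes \<alpha>: "1 \<le> \<alpha>" and nn: "0 \<le> a1" "0 \<le> a2" "0 \<le> b1" "0 \<le> b2"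
    and z1: "b1 = 0 \<Longrightarrow> a1 = 0" and z2: "b2 = 0 \<Longrightarrow> a2 = 0"
  shows "(a1 + a2) powr \<alpha> * (b1 + b2) powr (1 - \<alpha>) \<le> a1 powr \<alpha> * b1 powr (1 - \<alpha>) + a2 powr \<alpha> * b2 powr (1 - \<alpha>)"
proof -
  consider "b1 = 0" | "b2 = 0" | "b1 > 0" "b2 > 0" using nn by linarith
  then show ?thesis
  proof cases
    case 1 then show ?thesis using z1 \<alpha> by simp
  next
    case 2 then show ?thesis using z2 \<alpha> by simp
  next
    case 3
    define B where "B = b1 + b2"
    define t where "t = b2 / B"
    have B: "B > 0" using 3 by (simp add: B_def)
    have t: "0 \<le> t" "t \<le> 1" using 3 by (auto simp: t_def B_def)
    have 1: "1 - t = b1 / B" using B by (simp add: t_def B_def field_simps)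
    have eq: "(a1 + a2) / B = (1 - t) * (a1 / b1) + t * (a2 / b2)"
    proof -
      have "(1 - t) * (a1 / b1) = a1 / B" using 3 by (simp add: 1)
      moreover have "t * (a2 / b2) = a2 / B" using 3 by (simp add: t_def)
      ultimately show ?thesis by (simp add: add_divide_distrib)
    qed
    have "(a1 + a2) powr \<alpha> * (b1 + b2) powr (1 - \<alpha>) = B * ((a1 + a2) / B) powr \<alpha>"
      using B nn by (simp add: powr_scale_eq B_def)
    also have "\<dots> \<le> B * ((1 - t) * (a1 / b1) powr \<alpha> + t * (a2 / b2) powr \<alpha>)"
      unfolding eq using B nn t \<alpha> by (intro mult_left_mono powr_convex0) auto
    also have "\<dots> = b1 * (a1 / b1) powr \<alpha> + b2 * (a2 / b2) powr \<alpha>"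
    proof -
      have e1: "B * (1 - t) = b1" using B by (simp add: 1)
      have e2: "B * t = b2" using B by (simp add: t_def)
      show ?thesis by (simp add: distrib_left mult.assoc[symmetric] e1 e2)
    qed
    also have "\<dots> = a1 powr \<alpha> * b1 powr (1 - \<alpha>) + a2 powr \<alpha> * b2 powr (1 - \<alpha>)"
      using 3 nn by (simp add: powr_scale_eq)
    finally show ?thesis .
  qed
qed

lemma sum_point:
  fixes a b :: "'i \<Rightarrow> real"
  assumes \<alpha>: "1 \<le> \<alpha>" and I: "finite I"
    and nn: "\<And>i. i \<in> I \<Longrightarrow> 0 \<le> a i" "\<And>i. i \<in> I \<Longrightarrow> 0 \<le> b i"
    and z: "\<And>i. i \<in> I \<Longrightarrow> b i = 0 \<Longrightarrow> a i = 0"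
  shows "(\<Sum>i\<in>I. a i) powr \<alpha> * (\<Sum>i\<in>I. b i) powr (1 - \<alpha>) \<le> (\<Sum>i\<in>I. a i powr \<alpha> * b i powr (1 - \<alpha>))"
  using I nn z
proof (induction I rule: finite_induct)
  case empty then show ?case by simp
next
  case (insert j I)
  have "(\<Sum>i\<in>insert j I. a i) powr \<alpha> * (\<Sum>i\<in>insert j I. b i) powr (1 - \<alpha>)
      = (a j + (\<Sum>i\<in>I. a i)) powr \<alpha> * (b j + (\<Sum>i\<in>I. b i)) powr (1 - \<alpha>)"
    using insert by simp
  also have "\<dots> \<le> a j powr \<alpha> * b j powr (1 - \<alpha>) + (\<Sum>i\<in>I. a i) powr \<alpha> * (\<Sum>i\<in>I. b i) powr (1 - \<alpha>)"
  proof (rule two_point[OF \<alpha>])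
    show "0 \<le> a j" "0 \<le> b j" using insert by auto
    show "0 \<le> sum a I" "0 \<le> sum b I" using insert by (auto intro: sum_nonneg)
    show "b j = 0 \<Longrightarrow> a j = 0" using insert by auto
    assume "sum b I = 0"
    then have "\<forall>i\<in>I. b i = 0" using insert by (subst (asm) sum_nonneg_eq_0_iff) auto
    then show "sum a I = 0" using insert by auto
  qed
  also have "\<dots> \<le> a j powr \<alpha> * b j powr (1 - \<alpha>) + (\<Sum>i\<in>I. a i powr \<alpha> * b i powr (1 - \<alpha>))"
    using insert by (intro add_left_mono insert.IH) auto
  finally show ?case using insert by simp
qed

lemma weighted_sum_point:
  fixes a b v :: "'i \<Rightarrow> real"
  assumes \<alpha>: "1 \<le> \<alpha>" and I: "finite I"
    and nn: "\<And>i. i \<in> I \<Longrightarrow> 0 \<le> a i" "\<And>i. i \<in> I \<Longrightarrow> 0 \<le> b i" "\<And>i. i \<in> I \<Longrightarrow> 0 \<le> v i"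
    and z: "\<And>i. i \<in> I \<Longrightarrow> b i = 0 \<Longrightarrow> a i = 0"
  shows "(\<Sum>i\<in>I. v i * a i) powr \<alpha> * (\<Sum>i\<in>I. v i * b i) powr (1 - \<alpha>) \<le> (\<Sum>i\<in>I. v i * (a i powr \<alpha> * b i powr (1 - \<alpha>)))"
proof -
  have "(\<Sum>i\<in>I. v i * a i) powr \<alpha> * (\<Sum>i\<in>I. v i * b i) powr (1 - \<alpha>) \<le> (\<Sum>i\<in>I. (v i * a i) powr \<alpha> * (v i * b i) powr (1 - \<alpha>))"
    using nn z by (intro sum_point[OF \<alpha> I]) auto
  also have "\<dots> = (\<Sum>i\<in>I. v i * (a i powr \<alpha> * b i powr (1 - \<alpha>)))"
  proof (intro sum.cong refl)
    fix i assume i: "i \<in> I"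
    have vv: "v i powr \<alpha> * v i powr (1 - \<alpha>) = v i"
    proof (cases "v i = 0")
      case False then show ?thesis using nn(3)[OF i] by (simp add: powr_add[symmetric])
    qed simp
    show "(v i * a i) powr \<alpha> * (v i * b i) powr (1 - \<alpha>) = v i * (a i powr \<alpha> * b i powr (1 - \<alpha>))"
    proof -
      have "(v i * a i) powr \<alpha> * (v i * b i) powr (1 - \<alpha>) = (v i powr \<alpha> * v i powr (1 - \<alpha>)) * (a i powr \<alpha> * b i powr (1 - \<alpha>))"
        by (simp only: powr_mult mult_ac)
      then show ?thesis by (simp only: vv)
    qed
  qed
  finally show ?thesis .
qed


definition prodp :: "'a set \<Rightarrow> ('a \<Rightarrow> real) \<Rightarrow> 'a set \<Rightarrow> real" where
  "prodp U q s = (if s \<subseteq> U then (\<Prod>u\<in>U. if u \<in> s then q u else 1 - q u) else 0)"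

definition outdist :: "'a set \<Rightarrow> ('a \<Rightarrow> real) \<Rightarrow> 'a set pmf" where
  "outdist U q = map_pmf (\<lambda>f. {u \<in> U. f u}) (Pi_pmf U False (\<lambda>u. bernoulli_pmf (q u)))"

lemma pmf_outdist:
  assumes U: "finite U" and q: "\<And>u. 0 \<le> q u" "\<And>u. q u \<le> 1"
  shows "pmf (outdist U q) s = prodp U q s"
proof -
  let ?P = "Pi_pmf U False (\<lambda>u. bernoulli_pmf (q u))"
  let ?F = "\<lambda>f. {u \<in> U. f u}"
  have E: "set_pmf ?P \<subseteq> {f. \<forall>x. x \<notin> U \<longrightarrow> f x = False}"
    by (rule set_Pi_pmf_subset[OF U])
  have "pmf (outdist U q) s = measure ?P (?F -` {s})"
    unfolding outdist_def by (rule pmf_map)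
  also have "\<dots> = measure ?P (?F -` {s} \<inter> set_pmf ?P)"
    by (rule measure_Int_set_pmf[symmetric])
  also have "\<dots> = prodp U q s"
  proof (cases "s \<subseteq> U")
    case True
    define g0 where "g0 = (\<lambda>u. u \<in> s)"
    have "?F -` {s} \<inter> set_pmf ?P = {g0} \<inter> set_pmf ?P"
    proof (intro equalityI subsetI)
      fix f assume f: "f \<in> ?F -` {s} \<inter> set_pmf ?P"
      then have "f x = False" if "x \<notin> U" for x using E that by auto
      moreover have "?F f = s" using f by auto
      ultimately have "f = g0" using True unfolding g0_def by (auto simp: fun_eq_iff)
      then show "f \<in> {g0} \<inter> set_pmf ?P" using f by auto
    next
      fix f assume "f \<in> {g0} \<inter> set_pmf ?P"
      then show "f \<in> ?F -` {s} \<inter> set_pmf ?P" using True by (auto simp: g0_def)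
    qed
    then have "measure ?P (?F -` {s} \<inter> set_pmf ?P) = measure ?P ({g0} \<inter> set_pmf ?P)" by simp
    also have "\<dots> = pmf ?P g0" by (simp add: measure_Int_set_pmf measure_pmf_single)
    also have "\<dots> = (\<Prod>u\<in>U. pmf (bernoulli_pmf (q u)) (g0 u))"
      using True by (subst pmf_Pi[OF U]) (auto simp: g0_def)
    also have "\<dots> = prodp U q s"
      unfolding prodp_def if_P[OF True] using q by (intro prod.cong refl) (auto simp: g0_def)
    finally show ?thesis .
  next
    case False
    have "?F -` {s} \<inter> set_pmf ?P = {}" using False by auto
    then show ?thesis using False by (simp add: prodp_def)
  qed
  finally show ?thesis .
qed

lemma prodp_nonneg:
  assumes "\<And>u. 0 \<le> q u" "\<And>u. q u \<le> 1"
  shows "0 \<le> prodp U q s"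
  unfolding prodp_def using assms by (auto intro!: prod_nonneg)

lemma prodp_pos:
  assumes "finite U" "\<And>u. 0 < q u" "\<And>u. q u < 1" "s \<subseteq> U"
  shows "0 < prodp U q s"
  unfolding prodp_def using assms by (auto intro!: prod_pos)

lemma prod_if_split:
  assumes U: "finite U" and s: "s \<subseteq> U"
  shows "(\<Prod>u\<in>U. if u \<in> s then A u else B u) = (\<Prod>u\<in>s. A u) * (\<Prod>u\<in>U - s. B u)"
proof -
  have "(\<Prod>u\<in>U. if u \<in> s then A u else B u) = (\<Prod>u\<in>U \<inter> {u. u \<in> s}. A u) * (\<Prod>u\<in>U \<inter> - {u. u \<in> s}. B u)"
    by (rule prod.If_cases[OF U])
  also have "U \<inter> {u. u \<in> s} = s" using s by auto
  also have "U \<inter> - {u. u \<in> s} = U - s" by auto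
  finally show ?thesis .
qed

lemma sum_Pow_prod_if:
  fixes A B :: "'a \<Rightarrow> real"
  assumes U: "finite U"
  shows "(\<Sum>s\<in>Pow U. \<Prod>u\<in>U. if u \<in> s then A u else B u) = (\<Prod>u\<in>U. A u + B u)"
proof -
  have "(\<Sum>s\<in>Pow U. \<Prod>u\<in>U. if u \<in> s then A u else B u) = (\<Sum>s\<in>Pow U. (\<Prod>u\<in>s. A u) * (\<Prod>u\<in>U - s. B u))"
    by (intro sum.cong refl prod_if_split[OF U]) auto
  also have "\<dots> = (\<Prod>u\<in>U. A u + B u)"
    using prod_add[OF U, of A B] by simp
  finally show ?thesis .
qed

lemma sum_prodp_powr:
  assumes U: "finite U"
  shows "(\<Sum>s\<in>Pow U. prodp U q1 s powr \<alpha> * prodp U q2 s powr (1 - \<alpha>)) =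
    (\<Prod>u\<in>U. q1 u powr \<alpha> * q2 u powr (1 - \<alpha>) + (1 - q1 u) powr \<alpha> * (1 - q2 u) powr (1 - \<alpha>))"
proof -
  have "prodp U q1 s powr \<alpha> * prodp U q2 s powr (1 - \<alpha>) =
     (\<Prod>u\<in>U. if u \<in> s then q1 u powr \<alpha> * q2 u powr (1 - \<alpha>) else (1 - q1 u) powr \<alpha> * (1 - q2 u) powr (1 - \<alpha>))"
    if "s \<in> Pow U" for s
  proof -
    have "prodp U q1 s powr \<alpha> * prodp U q2 s powr (1 - \<alpha>) =
      (\<Prod>u\<in>U. (if u \<in> s then q1 u else 1 - q1 u) powr \<alpha>) * (\<Prod>u\<in>U. (if u \<in> s then q2 u else 1 - q2 u) powr (1 - \<alpha>))"
      using that by (simp add: prodp_def prod_powr_distrib)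
    also have "\<dots> = (\<Prod>u\<in>U. (if u \<in> s then q1 u else 1 - q1 u) powr \<alpha> * (if u \<in> s then q2 u else 1 - q2 u) powr (1 - \<alpha>))"
      by (rule prod.distrib[symmetric])
    also have "\<dots> = (\<Prod>u\<in>U. if u \<in> s then q1 u powr \<alpha> * q2 u powr (1 - \<alpha>) else (1 - q1 u) powr \<alpha> * (1 - q2 u) powr (1 - \<alpha>))"
      by (intro prod.cong refl) auto
    finally show ?thesis .
  qed
  then have "(\<Sum>s\<in>Pow U. prodp U q1 s powr \<alpha> * prodp U q2 s powr (1 - \<alpha>)) =
    (\<Sum>s\<in>Pow U. \<Prod>u\<in>U. if u \<in> s then q1 u powr \<alpha> * q2 u powr (1 - \<alpha>) else (1 - q1 u) powr \<alpha> * (1 - q2 u) powr (1 - \<alpha>))"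
    by (rule sum.cong[OF refl])
  also have "\<dots> = (\<Prod>u\<in>U. q1 u powr \<alpha> * q2 u powr (1 - \<alpha>) + (1 - q1 u) powr \<alpha> * (1 - q2 u) powr (1 - \<alpha>))"
    by (rule sum_Pow_prod_if[OF U])
  finally show ?thesis .
qed

lemma sum_prodp:
  assumes U: "finite U"
  shows "(\<Sum>s\<in>Pow U. prodp U q s) = 1"
proof -
  have "(\<Sum>s\<in>Pow U. prodp U q s) = (\<Sum>s\<in>Pow U. \<Prod>u\<in>U. if u \<in> s then q u else 1 - q u)"
    by (intro sum.cong refl) (auto simp: prodp_def)
  also have "\<dots> = (\<Prod>u\<in>U. q u + (1 - q u))" by (rule sum_Pow_prod_if[OF U])
  finally show ?thesis by simp
qed

lemma cond_on_event_intro: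
  fixes P Q :: "'b pmf"
  assumes fin: "finite (set_pmf Q)" and Z: "1 - \<delta> \<le> Z" "0 < Z"
    and le: "\<And>s. Z * pmf Q s \<le> pmf P s"
  shows "cond_on_event \<delta> P Q"
proof -
  define e where "e s = (if pmf P s = 0 then 0 else Z * pmf Q s / pmf P s)" for s
  have Pe: "pmf P s * e s = Z * pmf Q s" for s
  proof (cases "pmf P s = 0")
    case True
    then have "Z * pmf Q s \<le> 0" using le[of s] by simp
    then have "pmf Q s = 0" using Z(2) pmf_nonneg[of Q s] by (simp add: mult_le_0_iff)
    then show ?thesis using True by (simp add: e_def)
  qed (simp add: e_def)
  have e01: "0 \<le> e s \<and> e s \<le> 1" for s
  proof (cases "pmf P s = 0")
    case False
    then have "pmf P s > 0" using pmf_nonneg[of P s] by linarith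
    then show ?thesis using le[of s] Z(2) by (simp add: e_def divide_le_eq_1)
  qed (simp add: e_def)
  have sumQ: "(\<Sum>s\<in>set_pmf Q. pmf Q s) = 1" by (rule sum_pmf_eq_1[OF fin]) simp
  have inf: "(\<Sum>\<^sub>\<infinity>s. pmf P s * e s) = Z"
  proof -
    have "(\<Sum>\<^sub>\<infinity>s. pmf P s * e s) = (\<Sum>\<^sub>\<infinity>s\<in>set_pmf Q. Z * pmf Q s)"
      by (intro infsum_cong_neutral) (auto simp: Pe set_pmf_eq)
    also have "\<dots> = (\<Sum>s\<in>set_pmf Q. Z * pmf Q s)" by (rule infsum_finite[OF fin])
    also have "\<dots> = Z" by (simp add: sum_distrib_left[symmetric] sumQ)
    finally show ?thesis .
  qed
  have summ: "(\<lambda>s. pmf P s * e s) summable_on UNIV"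
  proof -
    have "(\<lambda>s. Z * pmf Q s) summable_on set_pmf Q" by (rule summable_on_finite[OF fin])
    then show ?thesis
      by (rule summable_on_cong_neutral[THEN iffD1, rotated -1]) (auto simp: Pe set_pmf_eq)
  qed
  have inf2: "(\<Sum>\<^sub>\<infinity>s. Z * pmf Q s) = Z" using inf by (simp add: Pe)
  show ?thesis unfolding cond_on_event_def
    by (intro exI[of _ e] conjI allI e01[THEN conjunct1] e01[THEN conjunct2] summ)
       (use Z in \<open>auto simp: inf2 Pe\<close>)
qed


definition mixf :: "'i set \<Rightarrow> ('i \<Rightarrow> real) \<Rightarrow> ('i \<Rightarrow> 'a set) \<Rightarrow> ('i \<Rightarrow> 'a \<Rightarrow> real) \<Rightarrow> 'a set \<Rightarrow> real" where
  "mixf S c U q s = (\<Sum>i\<in>S. c i * prodp (U i) (q i) s) / (\<Sum>i\<in>S. c i)"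

definition mixpmf :: "'i set \<Rightarrow> ('i \<Rightarrow> real) \<Rightarrow> ('i \<Rightarrow> 'a set) \<Rightarrow> ('i \<Rightarrow> 'a \<Rightarrow> real) \<Rightarrow> 'a set pmf" where
  "mixpmf S c U q = embed_pmf (mixf S c U q)"

definition mixOK :: "'i set \<Rightarrow> ('i \<Rightarrow> real) \<Rightarrow> ('i \<Rightarrow> 'a set) \<Rightarrow> ('i \<Rightarrow> 'a \<Rightarrow> real) \<Rightarrow> bool" where
  "mixOK S c U q \<longleftrightarrow> finite S \<and> (\<forall>i\<in>S. 0 \<le> c i) \<and> 0 < (\<Sum>i\<in>S. c i) \<and> (\<forall>i\<in>S. finite (U i)) \<and>
     (\<forall>i u. 0 < q i u \<and> q i u < 1)"

lemma prodp_zero_outside: "\<not> s \<subseteq> U \<Longrightarrow> prodp U q s = 0"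
  by (simp add: prodp_def)

lemma mixf_nonneg:
  assumes "mixOK S c U q" shows "0 \<le> mixf S c U q s"
  using assms unfolding mixf_def mixOK_def
  by (intro divide_nonneg_nonneg sum_nonneg mult_nonneg_nonneg prodp_nonneg) (auto intro: less_imp_le)

lemma mixf_support:
  assumes "mixOK S c U q" "mixf S c U q s \<noteq> 0"
  shows "s \<in> (\<Union>i\<in>S. Pow (U i))"
proof (rule ccontr)
  assume "s \<notin> (\<Union>i\<in>S. Pow (U i))"
  then have "\<forall>i\<in>S. prodp (U i) (q i) s = 0" by (auto intro: prodp_zero_outside)
  then have "mixf S c U q s = 0" by (simp add: mixf_def)
  with assms show False by simp
qed

lemma mixf_sum:
  assumes ok: "mixOK S c U q"
  shows "(\<Sum>s\<in>(\<Union>i\<in>S. Pow (U i)). mixf S c U q s) = 1"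
proof -
  let ?SS = "\<Union>i\<in>S. Pow (U i)"
  have fin: "finite ?SS" using ok by (auto simp: mixOK_def)
  have inner: "(\<Sum>s\<in>?SS. prodp (U i) (q i) s) = 1" if i: "i \<in> S" for i
  proof -
    have "(\<Sum>s\<in>?SS. prodp (U i) (q i) s) = (\<Sum>s\<in>Pow (U i). prodp (U i) (q i) s)"
      using fin i by (intro sum.mono_neutral_right) (auto intro: prodp_zero_outside)
    also have "\<dots> = 1" using ok i by (intro sum_prodp) (auto simp: mixOK_def)
    finally show ?thesis .
  qed
  have "(\<Sum>s\<in>?SS. mixf S c U q s) = (\<Sum>s\<in>?SS. \<Sum>i\<in>S. c i * prodp (U i) (q i) s) / (\<Sum>i\<in>S. c i)"
    unfolding mixf_def by (simp add: sum_divide_distrib)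
  also have "(\<Sum>s\<in>?SS. \<Sum>i\<in>S. c i * prodp (U i) (q i) s) = (\<Sum>i\<in>S. c i * (\<Sum>s\<in>?SS. prodp (U i) (q i) s))"
    by (subst sum.swap) (simp add: sum_distrib_left)
  also have "\<dots> = (\<Sum>i\<in>S. c i)" by (intro sum.cong refl) (simp add: inner)
  finally show ?thesis using ok by (simp add: mixOK_def)
qed

lemma pmf_mixpmf:
  assumes ok: "mixOK S c U q"
  shows "pmf (mixpmf S c U q) s = mixf S c U q s"
  unfolding mixpmf_def
proof (rule pmf_embed_pmf)
  show "0 \<le> mixf S c U q x" for x by (rule mixf_nonneg[OF ok])
  let ?SS = "\<Union>i\<in>S. Pow (U i)"
  have fin: "finite ?SS" using ok by (auto simp: mixOK_def)
  have "(\<integral>\<^sup>+x. ennreal (mixf S c U q x) \<partial>count_space UNIV) = (\<Sum>x\<in>?SS. ennreal (mixf S c U q x))"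
  proof (intro nn_integral_count_space'[OF fin])
    fix x assume "x \<notin> ?SS"
    then have "mixf S c U q x = 0" using mixf_support[OF ok, of x] by blast
    then show "ennreal (mixf S c U q x) = 0" by simp
  qed auto
  also have "\<dots> = ennreal (\<Sum>x\<in>?SS. mixf S c U q x)"
    using mixf_nonneg[OF ok] by (intro sum_ennreal) auto
  also have "\<dots> = 1" by (simp add: mixf_sum[OF ok])
  finally show "(\<integral>\<^sup>+x. ennreal (mixf S c U q x) \<partial>count_space UNIV) = 1" .
qed

lemma set_mixpmf:
  assumes ok: "mixOK S c U q"
  shows "set_pmf (mixpmf S c U q) \<subseteq> (\<Union>i\<in>S. Pow (U i))"
  using mixf_support[OF ok] by (auto simp: set_pmf_eq pmf_mixpmf[OF ok])

lemma renyi_mix: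
  fixes K \<alpha> :: real
  assumes ok1: "mixOK S c U q1" and ok2: "mixOK S c U q2" and \<alpha>: "1 < \<alpha>"
    and bnd: "\<And>i. i \<in> S \<Longrightarrow> (\<Prod>u\<in>U i. q1 i u powr \<alpha> * q2 i u powr (1 - \<alpha>) +
               (1 - q1 i u) powr \<alpha> * (1 - q2 i u) powr (1 - \<alpha>)) \<le> exp ((\<alpha> - 1) * K)"
  shows "renyi_div \<alpha> (mixpmf S c U q1) (mixpmf S c U q2) \<le> ereal K"
proof -
  let ?P = "mixpmf S c U q1" and ?Q = "mixpmf S c U q2"
  let ?SS = "\<Union>i\<in>S. Pow (U i)"
  let ?C = "\<Sum>i\<in>S. c i"
  have S: "finite S" and c: "\<And>i. i \<in> S \<Longrightarrow> 0 \<le> c i" and C: "0 < ?C"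
    and Uf: "\<And>i. i \<in> S \<Longrightarrow> finite (U i)"
    and q1: "\<And>i u. 0 < q1 i u" "\<And>i u. q1 i u < 1" and q2: "\<And>i u. 0 < q2 i u" "\<And>i u. q2 i u < 1"
    using ok1 ok2 by (auto simp: mixOK_def)
  have finSS: "finite ?SS" using S Uf by auto
  have pP: "pmf ?P s = mixf S c U q1 s" for s by (rule pmf_mixpmf[OF ok1])
  have pQ: "pmf ?Q s = mixf S c U q2 s" for s by (rule pmf_mixpmf[OF ok2])
  have p1nn: "0 \<le> prodp (U i) (q1 i) s" for i s using q1 by (intro prodp_nonneg) (auto intro: less_imp_le)
  have p2nn: "0 \<le> prodp (U i) (q2 i) s" for i s using q2 by (intro prodp_nonneg) (auto intro: less_imp_le)
  have sub: "set_pmf ?P \<subseteq> set_pmf ?Q"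
  proof
    fix s assume "s \<in> set_pmf ?P"
    then have "mixf S c U q1 s \<noteq> 0" by (simp add: set_pmf_eq pP)
    then have "(\<Sum>i\<in>S. c i * prodp (U i) (q1 i) s) \<noteq> 0" by (auto simp: mixf_def)
    then obtain i where i: "i \<in> S" "c i * prodp (U i) (q1 i) s \<noteq> 0"
      using sum.not_neutral_contains_not_neutral by blast
    have cne: "c i \<noteq> 0" using i(2) by (metis mult_zero_left)
    have ci: "c i > 0" using c[OF i(1)] cne by linarith
    have "s \<subseteq> U i"
    proof (rule ccontr)
      assume "\<not> s \<subseteq> U i"
      then have "prodp (U i) (q1 i) s = 0" by (rule prodp_zero_outside)
      with i(2) show False by simp
    qed
    then have pos: "0 < prodp (U i) (q2 i) s" using q2 Uf[OF i(1)] by (intro prodp_pos) auto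
    have "0 < c i * prodp (U i) (q2 i) s" using ci pos by simp
    also have "\<dots> \<le> (\<Sum>i\<in>S. c i * prodp (U i) (q2 i) s)"
      using S i(1) c p2nn by (intro member_le_sum) auto
    finally have "0 < mixf S c U q2 s" using C by (simp add: mixf_def)
    then show "s \<in> set_pmf ?Q" by (simp add: set_pmf_eq pQ)
  qed
  have finP: "finite (set_pmf ?P)" using set_mixpmf[OF ok1] finSS by (rule finite_subset)
  define G where "G s = pmf ?P s powr \<alpha> * pmf ?Q s powr (1 - \<alpha>)" for s
  define h where "h i s = prodp (U i) (q1 i) s powr \<alpha> * prodp (U i) (q2 i) s powr (1 - \<alpha>)" for i s
  have summ: "(\<lambda>s. pmf ?P s powr \<alpha> * pmf ?Q s powr (1 - \<alpha>)) summable_on set_pmf ?P"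
    by (rule summable_on_finite[OF finP])
  have rd: "renyi_div \<alpha> ?P ?Q = ereal (1 / (\<alpha> - 1) * ln (\<Sum>s\<in>set_pmf ?P. G s))"
    unfolding renyi_div_def G_def using sub summ by (simp add: infsum_finite[OF finP])
  have FSS: "(\<Sum>s\<in>set_pmf ?P. G s) = (\<Sum>s\<in>?SS. G s)"
    using finSS set_mixpmf[OF ok1] \<alpha>
    by (intro sum.mono_neutral_left) (auto simp: G_def set_pmf_eq)
  have Gs: "G s \<le> (\<Sum>i\<in>S. c i / ?C * h i s)" for s
  proof -
    define X where "X = (\<Sum>i\<in>S. c i * prodp (U i) (q1 i) s)"
    define Y where "Y = (\<Sum>i\<in>S. c i * prodp (U i) (q2 i) s)"
    have "G s = (X / ?C) powr \<alpha> * (Y / ?C) powr (1 - \<alpha>)"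
      by (simp add: G_def pP pQ mixf_def X_def Y_def)
    also have "\<dots> = X powr \<alpha> * Y powr (1 - \<alpha>) / (?C powr \<alpha> * ?C powr (1 - \<alpha>))"
      by (simp add: powr_divide)
    also have "?C powr \<alpha> * ?C powr (1 - \<alpha>) = ?C"
      using C by (simp add: powr_add[symmetric])
    also have "X powr \<alpha> * Y powr (1 - \<alpha>) \<le> (\<Sum>i\<in>S. c i * h i s)"
      unfolding X_def Y_def h_def
    proof (rule weighted_sum_point)
      fix i assume i: "i \<in> S" and z: "prodp (U i) (q2 i) s = 0"
      have "\<not> s \<subseteq> U i"
      proof
        assume "s \<subseteq> U i"
        then have "0 < prodp (U i) (q2 i) s" using q2 Uf[OF i] by (intro prodp_pos) auto
        with z show False by simp
      qed
      then show "prodp (U i) (q1 i) s = 0" by (rule prodp_zero_outside)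
    qed (use \<alpha> S c p1nn p2nn in auto)
    then have "X powr \<alpha> * Y powr (1 - \<alpha>) / ?C \<le> (\<Sum>i\<in>S. c i * h i s) / ?C"
      using C by (intro divide_right_mono) auto
    also have "\<dots> = (\<Sum>i\<in>S. c i / ?C * h i s)"
      by (simp add: sum_divide_distrib)
    finally show ?thesis .
  qed
  have hsum: "(\<Sum>s\<in>?SS. h i s) \<le> exp ((\<alpha> - 1) * K)" if i: "i \<in> S" for i
  proof -
    have "(\<Sum>s\<in>?SS. h i s) = (\<Sum>s\<in>Pow (U i). h i s)"
      using finSS i \<alpha> by (intro sum.mono_neutral_right) (auto simp: h_def prodp_zero_outside)
    also have "\<dots> = (\<Prod>u\<in>U i. q1 i u powr \<alpha> * q2 i u powr (1 - \<alpha>) + (1 - q1 i u) powr \<alpha> * (1 - q2 i u) powr (1 - \<alpha>))"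
      unfolding h_def by (rule sum_prodp_powr[OF Uf[OF i]])
    also have "\<dots> \<le> exp ((\<alpha> - 1) * K)" by (rule bnd[OF i])
    finally show ?thesis .
  qed
  have Fle: "(\<Sum>s\<in>set_pmf ?P. G s) \<le> exp ((\<alpha> - 1) * K)"
  proof -
    have "(\<Sum>s\<in>set_pmf ?P. G s) \<le> (\<Sum>s\<in>?SS. \<Sum>i\<in>S. c i / ?C * h i s)"
      unfolding FSS by (intro sum_mono Gs)
    also have "\<dots> = (\<Sum>i\<in>S. c i / ?C * (\<Sum>s\<in>?SS. h i s))"
      by (subst sum.swap) (simp add: sum_distrib_left)
    also have "\<dots> \<le> (\<Sum>i\<in>S. c i / ?C * exp ((\<alpha> - 1) * K))"
      using c C hsum by (intro sum_mono mult_left_mono) auto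
    also have "\<dots> = exp ((\<alpha> - 1) * K)"
      using C by (simp add: sum_distrib_right[symmetric] sum_divide_distrib[symmetric])
    finally show ?thesis .
  qed
  have Fpos: "0 < (\<Sum>s\<in>set_pmf ?P. G s)"
  proof -
    obtain s where s: "s \<in> set_pmf ?P" using set_pmf_not_empty[of ?P] by blast
    then have "s \<in> set_pmf ?Q" using sub by auto
    then have "0 < G s" using s by (simp add: G_def set_pmf_iff)
    moreover have "\<forall>t\<in>set_pmf ?P. 0 \<le> G t" by (simp add: G_def)
    ultimately show ?thesis using finP s by (intro sum_pos2) auto
  qed
  have "ln (\<Sum>s\<in>set_pmf ?P. G s) \<le> ln (exp ((\<alpha> - 1) * K))"
    using Fle Fpos by (subst ln_le_cancel_iff) auto
  then have "ln (\<Sum>s\<in>set_pmf ?P. G s) \<le> (\<alpha> - 1) * K" by simp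
  then have "1 / (\<alpha> - 1) * ln (\<Sum>s\<in>set_pmf ?P. G s) \<le> K"
    using \<alpha> by (simp add: field_simps)
  then show ?thesis unfolding rd by simp
qed


lemma sample_user_props:
  assumes "w \<in> set_pmf (sample_user \<Delta>0 W)"
  shows "finite w \<and> card w \<le> \<Delta>0 \<and> w \<subseteq> set W"
proof (cases "card (set W) \<le> \<Delta>0")
  case True then show ?thesis using assms by (simp add: sample_user_def)
next
  case False
  let ?A = "{A. A \<subseteq> set W \<and> card A = \<Delta>0}"
  have fin: "finite ?A" by (rule finite_subset[of _ "Pow (set W)"]) auto
  have ne: "?A \<noteq> {}"
  proof -
    obtain A where "A \<subseteq> set W" "card A = \<Delta>0" using False by (meson obtain_subset_with_card_n nat_le_linear)
    then show ?thesis by auto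
  qed
  have "w \<in> ?A" using assms False fin ne by (simp add: sample_user_def set_pmf_of_set)
  then show ?thesis by (auto intro: finite_subset)
qed

lemma finite_set_sample_user: "finite (set_pmf (sample_user \<Delta>0 W))"
proof (cases "card (set W) \<le> \<Delta>0")
  case True then show ?thesis by (simp add: sample_user_def)
next
  case False
  have "set_pmf (sample_user \<Delta>0 W) \<subseteq> Pow (set W)" using sample_user_props[of _ \<Delta>0 W] by auto
  then show ?thesis by (rule finite_subset) auto
qed

lemma finite_set_sample_users: "finite (set_pmf (sample_users \<Delta>0 xs))"
  by (induction xs) (auto simp: finite_set_sample_user)

lemma sample_users_props:
  assumes "As \<in> set_pmf (sample_users \<Delta>0 xs)" "w \<in> set As"
  shows "finite w \<and> card w \<le> \<Delta>0"
  using assms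
proof (induction xs arbitrary: As)
  case Nil then show ?case by simp
next
  case (Cons W Ws)
  then obtain A As' where "A \<in> set_pmf (sample_user \<Delta>0 W)" "As' \<in> set_pmf (sample_users \<Delta>0 Ws)" "As = A # As'"
    by auto
  then show ?case using Cons sample_user_props[of A \<Delta>0 W] by auto
qed

lemma sample_users_append:
  "sample_users \<Delta>0 (xs @ ys) =
     bind_pmf (sample_users \<Delta>0 xs) (\<lambda>A. bind_pmf (sample_users \<Delta>0 ys) (\<lambda>B. return_pmf (A @ B)))"
proof (induction xs)
  case Nil then show ?case by (simp add: bind_return_pmf bind_return_pmf')
next
  case (Cons W Ws)
  show ?case
    by (simp add: Cons bind_assoc_pmf bind_return_pmf)
qed


lemma pmf_bind_finite:
  assumes "finite (set_pmf N)"
  shows "pmf (bind_pmf N F) s = (\<Sum>i\<in>set_pmf N. pmf N i * pmf (F i) s)"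
  unfolding pmf_bind
  by (subst integral_measure_pmf[OF assms]) auto

definition NN :: "nat \<Rightarrow> 'a list list \<Rightarrow> 'a list \<Rightarrow> 'a list list \<Rightarrow> ('a set list \<times> 'a set \<times> 'a set list) pmf" where
  "NN \<Delta>0 L W R = bind_pmf (sample_users \<Delta>0 L) (\<lambda>A. bind_pmf (sample_user \<Delta>0 W) (\<lambda>w.
       bind_pmf (sample_users \<Delta>0 R) (\<lambda>B. return_pmf (A, w, B))))"

lemma finite_set_NN: "finite (set_pmf (NN \<Delta>0 L W R))"
proof -
  have "set_pmf (NN \<Delta>0 L W R) \<subseteq> set_pmf (sample_users \<Delta>0 L) \<times> set_pmf (sample_user \<Delta>0 W) \<times> set_pmf (sample_users \<Delta>0 R)"
    by (auto simp: NN_def)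
  then show ?thesis
    by (rule finite_subset) (auto simp: finite_set_sample_users finite_set_sample_user)
qed

lemma set_NN: "(A, w, B) \<in> set_pmf (NN \<Delta>0 L W R) \<Longrightarrow>
   A \<in> set_pmf (sample_users \<Delta>0 L) \<and> w \<in> set_pmf (sample_user \<Delta>0 W) \<and> B \<in> set_pmf (sample_users \<Delta>0 R)"
  by (auto simp: NN_def)

lemma sample_users_NN1:
  "sample_users \<Delta>0 (L @ R) = map_pmf (\<lambda>(A, w, B). A @ B) (NN \<Delta>0 L W R)"
  by (simp add: NN_def sample_users_append map_bind_pmf)

lemma sample_users_NN2:
  "sample_users \<Delta>0 (L @ W # R) = map_pmf (\<lambda>(A, w, B). A @ w # B) (NN \<Delta>0 L W R)"
  by (simp add: NN_def sample_users_append map_bind_pmf bind_assoc_pmf bind_return_pmf)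

lemma sum_list_map_zero: "(\<And>x. x \<in> set xs \<Longrightarrow> f x = 0) \<Longrightarrow> sum_list (map f xs) = (0::real)"
  by (induction xs) auto

lemma hist_outside: "u \<notin> \<Union>(set As) \<Longrightarrow> hist As u = 0"
  unfolding hist_def by (rule sum_list_map_zero) auto

lemma hist_insert: "hist (A @ w # B) u = hist (A @ B) u + (if u \<in> w then 1 / sqrt (real (card w)) else 0)"
  by (simp add: hist_def)

lemma WG_bind: "WG \<rho> \<delta> \<Delta>0 x = bind_pmf (sample_users \<Delta>0 x) (\<lambda>As.
   outdist (\<Union>(set As)) (\<lambda>u. pass_prob (wg_sigma \<rho>) (wg_threshold \<rho> \<delta> \<Delta>0) (hist As u)))"
  by (simp add: WG_def outdist_def)


lemma wg_sigma_pos: "0 < \<rho> \<Longrightarrow> 0 < wg_sigma \<rho>"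
  by (simp add: wg_sigma_def)

lemma wg_sigma_sq: "0 < \<rho> \<Longrightarrow> 2 * (wg_sigma \<rho>)\<^sup>2 = 1 / \<rho>"
  by (simp add: wg_sigma_def power_divide)

lemma prod_bern_bound:
  fixes a b :: "'a \<Rightarrow> real"
  assumes \<rho>: "0 < \<rho>" and \<alpha>: "1 < \<alpha>" and V: "finite V"
    and sq: "(\<Sum>u\<in>V. (a u - b u)\<^sup>2) \<le> 1"
  shows "(\<Prod>u\<in>V. pass_prob (wg_sigma \<rho>) T (a u) powr \<alpha> * pass_prob (wg_sigma \<rho>) T (b u) powr (1 - \<alpha>) +
     (1 - pass_prob (wg_sigma \<rho>) T (a u)) powr \<alpha> * (1 - pass_prob (wg_sigma \<rho>) T (b u)) powr (1 - \<alpha>))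
     \<le> exp ((\<alpha> - 1) * (\<rho> * \<alpha>))"
proof -
  let ?\<sigma> = "wg_sigma \<rho>"
  have \<sigma>: "0 < ?\<sigma>" using \<rho> by (rule wg_sigma_pos)
  have k: "\<alpha> * (\<alpha> - 1) * t / (2 * ?\<sigma>\<^sup>2) = \<alpha> * (\<alpha> - 1) * \<rho> * t" for t
    using \<rho> by (simp add: wg_sigma_sq[OF \<rho>])
  have "(\<Prod>u\<in>V. pass_prob ?\<sigma> T (a u) powr \<alpha> * pass_prob ?\<sigma> T (b u) powr (1 - \<alpha>) +
     (1 - pass_prob ?\<sigma> T (a u)) powr \<alpha> * (1 - pass_prob ?\<sigma> T (b u)) powr (1 - \<alpha>))
     \<le> (\<Prod>u\<in>V. exp (\<alpha> * (\<alpha> - 1) * \<rho> * (a u - b u)\<^sup>2))"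
    using bern_bound[OF \<sigma> \<alpha>] by (intro prod_mono) (auto simp: k)
  also have "\<dots> = exp (\<alpha> * (\<alpha> - 1) * \<rho> * (\<Sum>u\<in>V. (a u - b u)\<^sup>2))"
    by (simp add: exp_sum[OF V, symmetric] sum_distrib_left)
  also have "\<dots> \<le> exp (\<alpha> * (\<alpha> - 1) * \<rho> * 1)"
    using sq \<alpha> \<rho> by (intro exp_mono mult_left_mono) auto
  also have "\<dots> = exp ((\<alpha> - 1) * (\<rho> * \<alpha>))" by (simp add: mult_ac)
  finally show ?thesis .
qed

lemma hist_sq_sum:
  assumes V: "finite V" and w: "finite w"
  shows "(\<Sum>u\<in>V. (hist (A @ B) u - hist (A @ w # B) u)\<^sup>2) \<le> 1"
proof -
  have "(\<Sum>u\<in>V. (hist (A @ B) u - hist (A @ w # B) u)\<^sup>2) = (\<Sum>u\<in>V. if u \<in> w then 1 / real (card w) else 0)"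
    by (intro sum.cong refl) (simp add: hist_insert power_divide)
  also have "\<dots> = (\<Sum>u\<in>V \<inter> w. 1 / real (card w))"
    using V by (simp add: sum.If_cases Int_def)
  also have "\<dots> = real (card (V \<inter> w)) / real (card w)" by simp
  also have "\<dots> \<le> 1"
  proof (cases "card w = 0")
    case False
    have "card (V \<inter> w) \<le> card w" using w by (intro card_mono) auto
    then show ?thesis using False by (simp add: divide_le_eq_1)
  qed simp
  finally show ?thesis .
qed

lemma threshold_ge:
  assumes "1 \<le> k" "k \<le> \<Delta>0"
  shows "1 / sqrt (real k) + wg_sigma \<rho> * Phi_inv ((1 - \<delta>) powr (1 / real k)) \<le> wg_threshold \<rho> \<delta> \<Delta>0"
  unfolding wg_threshold_def using assms by (intro Max_ge) auto

lemma r_bound: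
  assumes \<rho>: "0 < \<rho>" and \<delta>: "0 < \<delta>" "\<delta> < 1"
    and w: "w \<in> set_pmf (sample_user \<Delta>0 W)"
  shows "1 - \<delta> \<le> (1 - pass_prob (wg_sigma \<rho>) (wg_threshold \<rho> \<delta> \<Delta>0) (1 / sqrt (real (card w)))) ^ card (w - V)"
proof -
  let ?\<sigma> = "wg_sigma \<rho>" and ?T = "wg_threshold \<rho> \<delta> \<Delta>0"
  let ?f = "1 - pass_prob ?\<sigma> ?T (1 / sqrt (real (card w)))"
  have \<sigma>: "0 < ?\<sigma>" using \<rho> by (rule wg_sigma_pos)
  have wp: "finite w" "card w \<le> \<Delta>0" using sample_user_props[OF w] by auto
  show ?thesis
  proof (cases "w - V = {}")
    case True
    then have "card (w - V) = 0" by (simp only: card.empty)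
    then show ?thesis using \<delta> by simp
  next
    case False
    define k where "k = card w"
    define j where "j = card (w - V)"
    have j1: "1 \<le> j" using False wp by (simp add: j_def Suc_le_eq card_gt_0_iff)
    have jk: "j \<le> k" unfolding j_def k_def using wp by (intro card_mono) auto
    have k1: "1 \<le> k" using j1 jk by simp
    define p where "p = (1 - \<delta>) powr (1 / real k)"
    have p: "0 < p" "p < 1"
      unfolding p_def using \<delta> k1 powr_less_mono2[of "1 / real k" "1 - \<delta>" 1] by auto
    have "?\<sigma> * Phi_inv p \<le> ?T - 1 / sqrt (real k)"
      using threshold_ge[OF k1, of \<Delta>0 \<rho> \<delta>] wp by (simp add: p_def k_def)
    then have "Phi (Phi_inv p) \<le> ?f"
      using fail_prob_ge_Phi[OF \<sigma>] by (simp add: k_def)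
    then have fp: "p \<le> ?f" using Phi_Phi_inv[OF p] by simp
    have "1 - \<delta> = (1 - \<delta>) powr 1" using \<delta> by simp
    also have "\<dots> \<le> (1 - \<delta>) powr (real j / real k)"
      using jk k1 \<delta> by (intro powr_mono') (auto simp: divide_le_eq_1)
    also have "\<dots> = p ^ j"
      unfolding p_def using \<delta> by (simp add: powr_powr powr_realpow[symmetric])
    also have "\<dots> \<le> ?f ^ j" using fp p by (intro power_mono) auto
    finally show ?thesis by (simp add: j_def)
  qed
qed


lemma rr_prodp_le:
  fixes q :: "'a \<Rightarrow> real"
  assumes U: "finite U" and w: "finite w"
    and q01: "\<And>u. 0 \<le> q u" "\<And>u. q u \<le> 1"
    and qw: "\<And>u. u \<in> w - U \<Longrightarrow> q u = p"
  shows "(1 - p) ^ card (w - U) * prodp U q s \<le> prodp (U \<union> w) q s"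
proof (cases "s \<subseteq> U")
  case False
  then have "prodp U q s = 0" by (rule prodp_zero_outside)
  then show ?thesis using prodp_nonneg[OF q01] by simp
next
  case True
  let ?F = "\<lambda>u. if u \<in> s then q u else 1 - q u"
  have "prodp (U \<union> w) q s = (\<Prod>u\<in>U \<union> (w - U). ?F u)"
  proof -
    have "s \<subseteq> U \<union> w" using True by auto
    then show ?thesis by (simp add: prodp_def)
  qed
  also have "\<dots> = (\<Prod>u\<in>U. ?F u) * (\<Prod>u\<in>w - U. ?F u)"
    using U w by (intro prod.union_disjoint) auto
  also have "(\<Prod>u\<in>w - U. ?F u) = (\<Prod>u\<in>w - U. 1 - p)"
    using True qw by (intro prod.cong refl) auto
  also have "\<dots> = (1 - p) ^ card (w - U)" by simp
  finally show ?thesis using True by (simp add: prodp_def mult.commute)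
qed

lemma add_user_case:
  fixes x x' :: "'a list list"
  assumes \<rho>: "0 < \<rho>" and \<delta>: "0 < \<delta>" "\<delta> < 1" and au: "add_user x x'"
  shows "\<exists>Q Q'. cond_on_event \<delta> (WG \<rho> \<delta> \<Delta>0 x) Q \<and> cond_on_event \<delta> (WG \<rho> \<delta> \<Delta>0 x') Q' \<and>
           (\<forall>\<alpha>>1. renyi_div \<alpha> Q Q' \<le> ereal (\<rho> * \<alpha>) \<and> renyi_div \<alpha> Q' Q \<le> ereal (\<rho> * \<alpha>))"
proof -
  obtain i W where x': "x' = take i x @ W # drop i x" using au by (auto simp: add_user_def)
  define L where "L = take i x"
  define R where "R = drop i x"
  have x: "x = L @ R" by (simp add: L_def R_def)
  have x'LR: "x' = L @ W # R" by (simp add: x' L_def R_def)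
  define N where "N = NN \<Delta>0 L W R"
  define S where "S = set_pmf N"
  have finS: "finite S" unfolding S_def N_def by (rule finite_set_NN)
  define \<pi> where "\<pi> = pass_prob (wg_sigma \<rho>) (wg_threshold \<rho> \<delta> \<Delta>0)"
  have \<sigma>: "0 < wg_sigma \<rho>" using \<rho> by (rule wg_sigma_pos)
  have \<pi>01: "0 < \<pi> h" "\<pi> h < 1" for h
    unfolding \<pi>_def using pass_prob_pos[OF \<sigma>] pass_prob_less1[OF \<sigma>] by auto
  define Uf where "Uf = (\<lambda>(A::'a set list, w::'a set, B::'a set list). \<Union>(set (A @ B)))"
  define U2 where "U2 = (\<lambda>(A::'a set list, w::'a set, B::'a set list). \<Union>(set (A @ w # B)))"
  define h1 where "h1 = (\<lambda>(A::'a set list, w::'a set, B::'a set list) u. \<pi> (hist (A @ B) u))"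
  define h2 where "h2 = (\<lambda>(A::'a set list, w::'a set, B::'a set list) u. \<pi> (hist (A @ w # B) u))"
  define rr where "rr = (\<lambda>(A::'a set list, w::'a set, B::'a set list).
     (1 - \<pi> (1 / sqrt (real (card w)))) ^ card (w - \<Union>(set (A @ B))))"
  define c where "c j = pmf N j * rr j" for j
  have h1b: "0 \<le> h1 j u" "h1 j u \<le> 1" for j u
    using \<pi>01 by (cases j; simp add: h1_def less_imp_le)+
  have h2b: "0 \<le> h2 j u" "h2 j u \<le> 1" for j u
    using \<pi>01 by (cases j; simp add: h2_def less_imp_le)+
  have idx: "\<exists>A w B. j = (A, w, B) \<and> A \<in> set_pmf (sample_users \<Delta>0 L) \<and> w \<in> set_pmf (sample_user \<Delta>0 W) \<and>
      B \<in> set_pmf (sample_users \<Delta>0 R)" if "j \<in> S" for j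
    using that set_NN[of _ _ _ \<Delta>0 L W R] unfolding S_def N_def by (cases j) blast
  have finU: "finite (Uf j)" "finite (U2 j)" if jS: "j \<in> S" for j
  proof -
    obtain A w B where j: "j = (A, w, B)" "A \<in> set_pmf (sample_users \<Delta>0 L)" "w \<in> set_pmf (sample_user \<Delta>0 W)"
      "B \<in> set_pmf (sample_users \<Delta>0 R)" using idx[OF jS] by blast
    have "finite v" if v: "v \<in> set A" for v using sample_users_props[OF j(2) v] by simp
    moreover have "finite v" if v: "v \<in> set B" for v using sample_users_props[OF j(4) v] by simp
    moreover have "finite w" using sample_user_props[OF j(3)] by simp
    ultimately show "finite (Uf j)" "finite (U2 j)" by (auto simp: Uf_def U2_def j(1))
  qed
  have rr: "1 - \<delta> \<le> rr j" "rr j \<le> 1" if jS: "j \<in> S" for j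
  proof -
    obtain A w B where j: "j = (A, w, B)" "w \<in> set_pmf (sample_user \<Delta>0 W)" using idx[OF jS] by blast
    show "1 - \<delta> \<le> rr j" unfolding j(1) rr_def \<pi>_def using r_bound[OF \<rho> \<delta> j(2)] by simp
    have p: "0 \<le> \<pi> (1 / sqrt (real (card w)))" "\<pi> (1 / sqrt (real (card w))) \<le> 1"
      using \<pi>01[of "1 / sqrt (real (card w))"] by auto
    show "rr j \<le> 1" unfolding j(1) rr_def using p by (auto intro!: power_le_one)
  qed
  have c_nn: "0 \<le> c j" if "j \<in> S" for j using rr(1)[OF that] \<delta> by (simp add: c_def)
  define Z where "Z = (\<Sum>j\<in>S. c j)"
  have Z: "1 - \<delta> \<le> Z"
  proof -
    have "1 - \<delta> = (\<Sum>j\<in>S. pmf N j * (1 - \<delta>))"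
      using sum_pmf_eq_1[OF finS, of N] by (simp add: S_def sum_distrib_right[symmetric])
    also have "\<dots> \<le> Z" unfolding Z_def c_def using rr by (intro sum_mono mult_left_mono) auto
    finally show ?thesis .
  qed
  have Zpos: "0 < Z" using Z \<delta> by linarith
  have ok1: "mixOK S c Uf h1"
    unfolding mixOK_def using finS c_nn Zpos finU \<pi>01 by (auto simp: Z_def h1_def split: prod.split)
  have ok2: "mixOK S c Uf h2"
    unfolding mixOK_def using finS c_nn Zpos finU \<pi>01 by (auto simp: Z_def h2_def split: prod.split)
  define Q where "Q = mixpmf S c Uf h1"
  define Q' where "Q' = mixpmf S c Uf h2"
  have pWG1: "pmf (WG \<rho> \<delta> \<Delta>0 x) s = (\<Sum>j\<in>S. pmf N j * prodp (Uf j) (h1 j) s)" for s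
  proof -
    have "WG \<rho> \<delta> \<Delta>0 x = bind_pmf N (\<lambda>j. outdist (Uf j) (h1 j))"
      unfolding WG_bind x sample_users_NN1[of _ _ _ W] N_def[symmetric]
      by (simp add: bind_map_pmf Uf_def h1_def \<pi>_def case_prod_beta)
    then show ?thesis
      unfolding S_def using finS[unfolded S_def]
      by (simp add: pmf_bind_finite) (intro sum.cong refl arg_cong2[where f="(*)"] pmf_outdist finU(1)[unfolded S_def] h1b, auto simp: S_def)
  qed
  have pWG2: "pmf (WG \<rho> \<delta> \<Delta>0 x') s = (\<Sum>j\<in>S. pmf N j * prodp (U2 j) (h2 j) s)" for s
  proof -
    have "WG \<rho> \<delta> \<Delta>0 x' = bind_pmf N (\<lambda>j. outdist (U2 j) (h2 j))"
      unfolding WG_bind x'LR sample_users_NN2 N_def[symmetric]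
      by (simp add: bind_map_pmf U2_def h2_def \<pi>_def case_prod_beta)
    then show ?thesis
      unfolding S_def using finS[unfolded S_def]
      by (simp add: pmf_bind_finite) (intro sum.cong refl arg_cong2[where f="(*)"] pmf_outdist finU(2)[unfolded S_def] h2b, auto simp: S_def)
  qed
  have ZQ: "Z * pmf (mixpmf S c Uf q) s = (\<Sum>j\<in>S. c j * prodp (Uf j) (q j) s)" if ok: "mixOK S c Uf q" for q s
    using Zpos by (simp add: pmf_mixpmf[OF ok] mixf_def Z_def)
  have cond1: "cond_on_event \<delta> (WG \<rho> \<delta> \<Delta>0 x) Q"
    unfolding Q_def
  proof (rule cond_on_event_intro[OF _ Z Zpos])
    show "finite (set_pmf (mixpmf S c Uf h1))"
      by (rule finite_subset[OF set_mixpmf[OF ok1]]) (use finS finU in auto)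
    fix s
    show "Z * pmf (mixpmf S c Uf h1) s \<le> pmf (WG \<rho> \<delta> \<Delta>0 x) s"
      unfolding ZQ[OF ok1] pWG1 c_def
    proof (intro sum_mono)
      fix j assume j: "j \<in> S"
      have "0 \<le> prodp (Uf j) (h1 j) s" using \<pi>01 by (intro prodp_nonneg) (auto simp: h1_def less_imp_le split: prod.split)
      then show "pmf N j * rr j * prodp (Uf j) (h1 j) s \<le> pmf N j * prodp (Uf j) (h1 j) s"
      proof -
        have "rr j * prodp (Uf j) (h1 j) s \<le> prodp (Uf j) (h1 j) s"
          using rr(1,2)[OF j] \<delta> \<open>0 \<le> prodp (Uf j) (h1 j) s\<close> by (intro mult_left_le_one_le) auto
        then show ?thesis by (simp add: mult.assoc mult_left_mono)
      qed
    qed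
  qed
  have cond2: "cond_on_event \<delta> (WG \<rho> \<delta> \<Delta>0 x') Q'"
    unfolding Q'_def
  proof (rule cond_on_event_intro[OF _ Z Zpos])
    show "finite (set_pmf (mixpmf S c Uf h2))"
      by (rule finite_subset[OF set_mixpmf[OF ok2]]) (use finS finU in auto)
    fix s
    show "Z * pmf (mixpmf S c Uf h2) s \<le> pmf (WG \<rho> \<delta> \<Delta>0 x') s"
      unfolding ZQ[OF ok2] pWG2 c_def
    proof (intro sum_mono)
      fix j assume j: "j \<in> S"
      obtain A w B where jj: "j = (A, w, B)" "w \<in> set_pmf (sample_user \<Delta>0 W)" using idx[OF j] by blast
      have key: "rr j * prodp (Uf j) (h2 j) s \<le> prodp (U2 j) (h2 j) s"
      proof -
        have "U2 j = Uf j \<union> w" by (auto simp: U2_def Uf_def jj(1))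
        moreover have "rr j * prodp (Uf j) (h2 j) s \<le> prodp (Uf j \<union> w) (h2 j) s"
          unfolding rr_def jj(1) Uf_def
        proof (simp only: prod.case, rule rr_prodp_le)
          show "finite (\<Union>(set (A @ B)))" using finU(1)[OF j] by (simp add: Uf_def jj(1))
          show "finite w" using sample_user_props[OF jj(2)] by simp
          show "0 \<le> h2 (A, w, B) u" "h2 (A, w, B) u \<le> 1" for u using \<pi>01 by (auto simp: h2_def less_imp_le)
          fix u assume "u \<in> w - \<Union>(set (A @ B))"
          then show "h2 (A, w, B) u = \<pi> (1 / sqrt (real (card w)))"
            by (simp add: h2_def hist_insert hist_outside)
        qed
        ultimately show ?thesis by simp
      qed
      show "pmf N j * rr j * prodp (Uf j) (h2 j) s \<le> pmf N j * prodp (U2 j) (h2 j) s"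
        using key by (simp add: mult.assoc mult_left_mono)
    qed
  qed
  have bnd: "(\<Prod>u\<in>Uf j. qa j u powr \<alpha> * qb j u powr (1 - \<alpha>) + (1 - qa j u) powr \<alpha> * (1 - qb j u) powr (1 - \<alpha>))
      \<le> exp ((\<alpha> - 1) * (\<rho> * \<alpha>))"
    if j: "j \<in> S" and \<alpha>: "1 < \<alpha>" and qq: "(qa = h1 \<and> qb = h2) \<or> (qa = h2 \<and> qb = h1)" for j \<alpha> qa qb
  proof -
    obtain A w B where jj: "j = (A, w, B)" "w \<in> set_pmf (sample_user \<Delta>0 W)" using idx[OF j] by blast
    have fU: "finite (\<Union>(set (A @ B)))" using finU(1)[OF j] by (simp add: Uf_def jj(1))
    have fw: "finite w" using sample_user_props[OF jj(2)] by simp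
    have sq1: "(\<Sum>u\<in>\<Union>(set (A @ B)). (hist (A @ B) u - hist (A @ w # B) u)\<^sup>2) \<le> 1"
      by (rule hist_sq_sum[OF fU fw])
    have sq2: "(\<Sum>u\<in>\<Union>(set (A @ B)). (hist (A @ w # B) u - hist (A @ B) u)\<^sup>2) \<le> 1"
      using sq1 by (simp add: power2_commute)
    from qq show ?thesis
    proof
      assume "qa = h1 \<and> qb = h2"
      then show ?thesis
        using prod_bern_bound[OF \<rho> \<alpha> fU sq1, of "wg_threshold \<rho> \<delta> \<Delta>0"]
        by (simp add: jj(1) Uf_def h1_def h2_def \<pi>_def)
    next
      assume "qa = h2 \<and> qb = h1"
      then show ?thesis
        using prod_bern_bound[OF \<rho> \<alpha> fU sq2, of "wg_threshold \<rho> \<delta> \<Delta>0"]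
        by (simp add: jj(1) Uf_def h1_def h2_def \<pi>_def)
    qed
  qed
  have ren: "renyi_div \<alpha> Q Q' \<le> ereal (\<rho> * \<alpha>) \<and> renyi_div \<alpha> Q' Q \<le> ereal (\<rho> * \<alpha>)" if \<alpha>: "1 < \<alpha>" for \<alpha>
    unfolding Q_def Q'_def
    using renyi_mix[OF ok1 ok2 \<alpha>, of "\<rho> * \<alpha>"] renyi_mix[OF ok2 ok1 \<alpha>, of "\<rho> * \<alpha>"] bnd[OF _ \<alpha>]
    by blast
  show ?thesis using cond1 cond2 ren by blast
qed


theorem mainTheorem3:
  fixes \<rho> \<delta> :: real and \<Delta>0 :: nat
  assumes "\<rho> > 0" and "0 < \<delta>" and "\<delta> < 1"
  shows "approx_zCDP \<delta> \<rho> neighbors (WG \<rho> \<delta> \<Delta>0 :: 'a list list \<Rightarrow> 'a set pmf)"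
  unfolding approx_zCDP_def
proof (intro allI impI)
  fix x x' :: "'a list list"
  assume "neighbors x x'"
  then consider "add_user x x'" | "add_user x' x" by (auto simp: neighbors_def)
  then show "\<exists>Q Q'. cond_on_event \<delta> (WG \<rho> \<delta> \<Delta>0 x) Q \<and> cond_on_event \<delta> (WG \<rho> \<delta> \<Delta>0 x') Q' \<and>
           (\<forall>\<alpha>>1. renyi_div \<alpha> Q Q' \<le> ereal (\<rho> * \<alpha>) \<and> renyi_div \<alpha> Q' Q \<le> ereal (\<rho> * \<alpha>))"
  proof cases
    case 1
    then show ?thesis using add_user_case[OF assms] by blast
  next
    case 2
    then obtain Q Q' where "cond_on_event \<delta> (WG \<rho> \<delta> \<Delta>0 x') Q" "cond_on_event \<delta> (WG \<rho> \<delta> \<Delta>0 x) Q'"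
      "\<forall>\<alpha>>1. renyi_div \<alpha> Q Q' \<le> ereal (\<rho> * \<alpha>) \<and> renyi_div \<alpha> Q' Q \<le> ereal (\<rho> * \<alpha>)"
      using add_user_case[OF assms, of x' x \<Delta>0] by blast
    then show ?thesis by blast
  qed
qed


end
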